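(* Let $d\ge 2$ be an integer. Let $(\mathrm{CD}_d,H_d)$ be a combinatorial description of $\mathcal{W}_d$ which is compatible with $\mathrm{RT}$ via equivariant surjections $p_n:\mathrm{RT}(n)\to\mathrm{CD}_d(n)$. Then every $p_n$ is a bijection; that is, the only combinatorial description of $\mathcal{W}_d$ compatible with $\mathrm{RT}$ is $\mathrm{RT}$ itself (with $H_d$ corresponding to $F$).
   Context: A rooted tree on a finite vertex set $V\subset\mathbb{N}$ is a set $E$ of ordered pairs of elements of $V$ (an edge $(v,w)$ means $w$ is a child of $v$) such that exactly one vertex $r$ (the root) has no parent, every other vertex has exactly one parent, and every vertex is connected to the root by following parents. For $v\in V$, $\tau_v$ is the subtree of $v$ and all its descendants. $\mathrm{RT}(n)$ is the set of rooted trees on $[n]=\{1,\dots,n\}$; $\mathfrak{S}_n$ acts on $\mathrm{RT}(n)$ by relabelling vertices. Let $\mathcal{C}_d=C^\infty(\mathbb{R}^d,\mathbb{R}^d)$, $g_j$ the $j$-th coordinate, $\partial_j=\partial/\partial x_j$. For $\tau$ with root $r$ whose children are $v_1,\dots,v_k$, define recursively the $n$-linear map $F(\tau)((f^i)_{i\in V})=\sum_{j_1,\dots,j_k=1}^d F(\tau_{v_1})((f^i)_{i\in V(\tau_{v_1})})_{j_1}\cdots F(\tau_{v_k})((f^i)_{i\in V(\tau_{v_k})})_{j_k}\,\partial_{j_1}\cdots\partial_{j_k}f^r$ (for a single vertex $F(\tau)=f^r$). $\mathcal{W}_d(n)$ is the real vector space spanned by $\{F(\tau):\tau\in\mathrm{RT}(n)\}$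 inside the $n$-linear maps $\mathcal{C}_d^n\to\mathcal{C}_d$; $\mathfrak{S}_n$ acts on it by permuting the $n$ inputs, and $F$ is $\mathfrak{S}_n$-equivariant. A combinatorial description of $\mathcal{W}_d$ is a pair $(\mathrm{CD}_d,H_d)$ where $\mathrm{CD}_d=(\mathrm{CD}_d(n))_{n}$ is a sequence of sets, $\mathrm{CD}_d(n)$ carrying an action of $\mathfrak{S}_n$, and $H_d^n:\mathrm{CD}_d(n)\to\mathcal{W}_d(n)$ are $\mathfrak{S}_n$-equivariant maps whose images span $\mathcal{W}_d(n)$. It is compatible with $\mathrm{RT}$ if there are $\mathfrak{S}_n$-equivariant surjections $p_n:\mathrm{RT}(n)\to\mathrm{CD}_d(n)$ with $F(\tau)=H^n_d(p_n(\tau))$ for all $\tau\in\mathrm{RT}(n)$. *)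

theory Defs
  imports "HOL-Analysis.Analysis" "HOL-Combinatorics.Permutations"
begin

definition parents :: "(nat \<times> nat) set \<Rightarrow> nat \<Rightarrow> nat set" where
  "parents E v = {u. (u, v) \<in> E}"

definition children :: "(nat \<times> nat) set \<Rightarrow> nat \<Rightarrow> nat set" where
  "children E v = {w. (v, w) \<in> E}"

definition is_rooted_tree :: "nat set \<Rightarrow> (nat \<times> nat) set \<Rightarrow> bool" where
  "is_rooted_tree V E \<longleftrightarrow>
     E \<subseteq> V \<times> V \<and>
     (\<exists>!r. r \<in> V \<and> parents E r = {}) \<and>
     (\<forall>r\<in>V. parents E r = {} \<longrightarrow>
        (\<forall>v\<in>V. v \<noteq> r \<longrightarrow> (\<exists>!u. (u, v) \<in> E)) \<and>
        (\<forall>v\<in>V. (r, v) \<in> E\<^sup>*))"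

definition tree_root :: "nat set \<Rightarrow> (nat \<times> nat) set \<Rightarrow> nat" where
  "tree_root V E = (THE r. r \<in> V \<and> parents E r = {})"

definition RT :: "nat \<Rightarrow> (nat \<times> nat) set set" where
  "RT n = {E. is_rooted_tree {1..n} E}"

definition act_RT :: "(nat \<Rightarrow> nat) \<Rightarrow> (nat \<times> nat) set \<Rightarrow> (nat \<times> nat) set" where
  "act_RT \<sigma> E = (\<lambda>(v, w). (\<sigma> v, \<sigma> w)) ` E"

definition partial :: "'d::finite \<Rightarrow> (real^'d \<Rightarrow> real^'d) \<Rightarrow> (real^'d \<Rightarrow> real^'d)" where
  "partial j g = (\<lambda>x. frechet_derivative g (at x) (axis j 1))"

fun partials :: "'d::finite list \<Rightarrow> (real^'d \<Rightarrow> real^'d) \<Rightarrow> (real^'d \<Rightarrow> real^'d)" where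
  "partials [] g = g"
| "partials (j # js) g = partial j (partials js g)"

text \<open>C^infinity: every iterated partial derivative exists and is (Frechet) differentiable
  everywhere (hence all partial derivatives of all orders exist and are continuous).\<close>
definition smooth :: "(real^'d::finite \<Rightarrow> real^'d) \<Rightarrow> bool" where
  "smooth g \<longleftrightarrow> (\<forall>js x. partials js g differentiable (at x))"

text \<open>Inputs (f^i)_{i in [n]} are represented as a function from indices to vector fields.
  The recursion is made structural by a fuel parameter k; with fuel >= the number of
  vertices, it computes F of the subtree at v.\<close>
fun ed :: "nat \<Rightarrow> (nat \<times> nat) set \<Rightarrow> (nat \<Rightarrow> real^'d::finite \<Rightarrow> real^'d) \<Rightarrow> nat
           \<Rightarrow> real^'d \<Rightarrow> real^'d" where
  "ed 0 E f v = f v"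
| "ed (Suc k) E f v = (\<lambda>x.
     \<Sum>js \<in> PiE (children E v) (\<lambda>_. (UNIV :: 'd set)).
        (\<Prod>c \<in> children E v. ed k E f c x $ js c) *\<^sub>R
        partials (map js (sorted_list_of_set (children E v))) (f v) x)"

definition F :: "nat \<Rightarrow> (nat \<times> nat) set \<Rightarrow> (nat \<Rightarrow> real^'d::finite \<Rightarrow> real^'d) \<Rightarrow> real^'d \<Rightarrow> real^'d" where
  "F n E f = ed n E f (tree_root {1..n} E)"

type_synonym 'd nmap = "(nat \<Rightarrow> real^'d \<Rightarrow> real^'d) \<Rightarrow> real^'d \<Rightarrow> real^'d"

text \<open>Equality as n-linear maps C_d^n -> C_d: agreement on all tuples of smooth fields
  indexed by [n].\<close>
definition eqW :: "nat \<Rightarrow> 'd::finite nmap \<Rightarrow> 'd nmap \<Rightarrow> bool" where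
  "eqW n \<phi> \<psi> \<longleftrightarrow> (\<forall>f. (\<forall>i\<in>{1..n}. smooth (f i)) \<longrightarrow> \<phi> f = \<psi> f)"

definition inW :: "nat \<Rightarrow> 'd::finite nmap \<Rightarrow> bool" where
  "inW n \<phi> \<longleftrightarrow> (\<exists>c :: (nat \<times> nat) set \<Rightarrow> real.
      eqW n \<phi> (\<lambda>f x. \<Sum>\<tau>\<in>RT n. c \<tau> *\<^sub>R F n \<tau> f x))"

text \<open>Action of a permutation on n-linear maps by permuting the inputs; F is equivariant
  for this action: F(sigma.tau)(f) = F(tau)(f o sigma).\<close>
definition act_W :: "(nat \<Rightarrow> nat) \<Rightarrow> 'd::finite nmap \<Rightarrow> 'd nmap" where
  "act_W \<sigma> \<phi> = (\<lambda>f. \<phi> (f \<circ> \<sigma>))"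

definition is_action :: "nat \<Rightarrow> 'c set \<Rightarrow> ((nat \<Rightarrow> nat) \<Rightarrow> 'c \<Rightarrow> 'c) \<Rightarrow> bool" where
  "is_action n C a \<longleftrightarrow>
     (\<forall>\<sigma> x. \<sigma> permutes {1..n} \<longrightarrow> x \<in> C \<longrightarrow> a \<sigma> x \<in> C) \<and>
     (\<forall>x\<in>C. a id x = x) \<and>
     (\<forall>\<sigma> \<rho> x. \<sigma> permutes {1..n} \<longrightarrow> \<rho> permutes {1..n} \<longrightarrow> x \<in> C \<longrightarrow>
        a (\<sigma> \<circ> \<rho>) x = a \<sigma> (a \<rho> x))"


definition is_comb_descr ::
  "(nat \<Rightarrow> 'c set) \<Rightarrow> (nat \<Rightarrow> (nat \<Rightarrow> nat) \<Rightarrow> 'c \<Rightarrow> 'c) \<Rightarrow> (nat \<Rightarrow> 'c \<Rightarrow> 'd::finite nmap) \<Rightarrow> bool" where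
  "is_comb_descr CD a H \<longleftrightarrow> (\<forall>n.
     is_action n (CD n) (a n) \<and>
     (\<forall>c\<in>CD n. inW n (H n c)) \<and>
     (\<forall>\<sigma> c. \<sigma> permutes {1..n} \<longrightarrow> c \<in> CD n \<longrightarrow>
        eqW n (H n (a n \<sigma> c)) (act_W \<sigma> (H n c))) \<and>
     (\<forall>\<phi>. inW n \<phi> \<longrightarrow> (\<exists>C u. finite C \<and> C \<subseteq> CD n \<and>
        eqW n \<phi> (\<lambda>f x. \<Sum>c\<in>C. u c *\<^sub>R H n c f x))))"

definition compatible_RT ::
  "(nat \<Rightarrow> 'c set) \<Rightarrow> (nat \<Rightarrow> (nat \<Rightarrow> nat) \<Rightarrow> 'c \<Rightarrow> 'c) \<Rightarrow> (nat \<Rightarrow> 'c \<Rightarrow> 'd::finite nmap)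
    \<Rightarrow> (nat \<Rightarrow> (nat \<times> nat) set \<Rightarrow> 'c) \<Rightarrow> bool" where
  "compatible_RT CD a H p \<longleftrightarrow> (\<forall>n.
     p n ` RT n = CD n \<and>
     (\<forall>\<sigma> \<tau>. \<sigma> permutes {1..n} \<longrightarrow> \<tau> \<in> RT n \<longrightarrow> p n (act_RT \<sigma> \<tau>) = a n \<sigma> (p n \<tau>)) \<and>
     (\<forall>\<tau>\<in>RT n. eqW n (F n \<tau>) (H n (p n \<tau>))))"

end

theory Submission
  imports Defs
begin

definition GG :: "'d::finite \<Rightarrow> 'd \<Rightarrow> real \<Rightarrow> real \<Rightarrow> real^'d \<Rightarrow> (real^'d \<Rightarrow> real^'d)" where
 "GG i1 i2 a b e = (\<lambda>x. ((a + b * x$i2) * exp (x$i1)) *\<^sub>R e)"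

lemma GG_deriv: "(GG i1 i2 a b e has_derivative (\<lambda>h. ((b * h$i2) * exp (x$i1) + (a + b * x$i2) * (exp (x$i1) * h$i1)) *\<^sub>R e)) (at x)"
  unfolding GG_def
  by (auto intro!: derivative_eq_intros bounded_linear_imp_has_derivative bounded_linear_vec_nth)

lemma partial_GG: "partial j (GG i1 i2 a b e) = (if j = i1 then GG i1 i2 a b e else if j = i2 then GG i1 i2 b 0 e else GG i1 i2 0 0 e)"
  if "i1 \<noteq> i2"
proof
  fix x
  show "partial j (GG i1 i2 a b e) x = (if j = i1 then GG i1 i2 a b e else if j = i2 then GG i1 i2 b 0 e else GG i1 i2 0 0 e) x"
    unfolding partial_def frechet_derivative_at[OF GG_deriv, symmetric]
    using that by (auto simp: GG_def axis_def algebra_simps)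
qed


lemma partials_GG_ex: "i1 \<noteq> i2 \<Longrightarrow> \<exists>a' b'. partials js (GG i1 i2 a b e) = GG i1 i2 a' b' e"
proof (induction js)
  case Nil then show ?case by auto
next
  case (Cons j js)
  then obtain a' b' where "partials js (GG i1 i2 a b e) = GG i1 i2 a' b' e" by auto
  then show ?case using Cons.prems by (auto simp: partial_GG)
qed

lemma smooth_GG: "i1 \<noteq> i2 \<Longrightarrow> smooth (GG i1 i2 a b e)"
  unfolding smooth_def
proof (intro allI)
  fix js x assume "i1 \<noteq> i2"
  then obtain a' b' where eq: "partials js (GG i1 i2 a b e) = GG i1 i2 a' b' e"
    using partials_GG_ex by blast
  show "partials js (GG i1 i2 a b e) differentiable at x"
    unfolding eq differentiable_def using GG_deriv by blast
qed

definition cnt :: "'a \<Rightarrow> 'a list \<Rightarrow> nat" where "cnt i l = length (filter (\<lambda>j. j = i) l)"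

lemma partials_GG: "i1 \<noteq> i2 \<Longrightarrow> set l \<subseteq> {i1, i2} \<Longrightarrow>
  partials l (GG i1 i2 a b e) = (if cnt i2 l = 0 then GG i1 i2 a b e else if cnt i2 l = 1 then GG i1 i2 b 0 e else GG i1 i2 0 0 e)"
proof (induction l)
  case Nil then show ?case by (simp add: cnt_def)
next
  case (Cons j js)
  then show ?case by (auto simp: partial_GG cnt_def)
qed

lemma GG_0: "GG i1 i2 a b e 0 = a *\<^sub>R e" by (simp add: GG_def)



locale rtree =
  fixes V :: "nat set" and E :: "(nat \<times> nat) set"
  assumes tree: "is_rooted_tree V E" and finV: "finite V"
begin

definition r where "r = tree_root V E"

lemma sub: "E \<subseteq> V \<times> V" using tree unfolding is_rooted_tree_def by (rule conjunct1)

lemma root: "r \<in> V" "\<And>x. (x, r) \<notin> E"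
proof -
  have ex: "\<exists>!r. r \<in> V \<and> parents E r = {}" using tree unfolding is_rooted_tree_def by (rule conjunct1[OF conjunct2])
  have "r \<in> V \<and> parents E r = {}" unfolding r_def tree_root_def by (rule theI'[OF ex])
  then show "r \<in> V" "\<And>x. (x, r) \<notin> E" by (auto simp: parents_def)
qed

lemma pr: "parents E r = {}" using root(2) by (auto simp: parents_def)

lemma AA: "(\<forall>v\<in>V. v \<noteq> r \<longrightarrow> (\<exists>!u. (u, v) \<in> E)) \<and> (\<forall>v\<in>V. (r, v) \<in> E\<^sup>*)"
proof -
  have A: "\<forall>r\<in>V. parents E r = {} \<longrightarrow>
        (\<forall>v\<in>V. v \<noteq> r \<longrightarrow> (\<exists>!u. (u, v) \<in> E)) \<and>
        (\<forall>v\<in>V. (r, v) \<in> E\<^sup>*)" using tree unfolding is_rooted_tree_def by (rule conjunct2[OF conjunct2])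
  show ?thesis using A root(1) pr by blast
qed

lemma uniq: "v \<in> V \<Longrightarrow> v \<noteq> r \<Longrightarrow> (x, v) \<in> E \<Longrightarrow> (y, v) \<in> E \<Longrightarrow> x = y"
  using AA by blast

lemma reach: "v \<in> V \<Longrightarrow> (r, v) \<in> E\<^sup>*"
  using AA by blast

lemma acyclic: "(v, v) \<notin> E\<^sup>+"
proof
  assume cyc: "(v, v) \<in> E\<^sup>+"
  define C where "C = {x. (x, v) \<in> E\<^sup>* \<and> (v, x) \<in> E\<^sup>*}"
  have par: "\<exists>p\<in>C. (p, x) \<in> E" if "x \<in> C" for x
  proof -
    have xC: "(x, v) \<in> E\<^sup>*" "(v, x) \<in> E\<^sup>*" using that unfolding C_def by auto
    have "(v, x) \<in> E\<^sup>+"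
    proof (cases "x = v")
      case True then show ?thesis using cyc by simp
    next
      case False then show ?thesis using rtranclD[OF xC(2)] by blast
    qed
    then have "\<exists>p. (v, p) \<in> E\<^sup>* \<and> (p, x) \<in> E" by (rule tranclD2)
    then obtain p where p: "(v, p) \<in> E\<^sup>*" "(p, x) \<in> E" by blast
    have "(p, v) \<in> E\<^sup>*" using p(2) xC(1) by (rule converse_rtrancl_into_rtrancl)
    then have "p \<in> C" using p(1) by (simp add: C_def)
    then show ?thesis using p(2) by blast
  qed
  have rC: "r \<notin> C" using par root(2) by blast
  have "v \<in> V" using cyc trancl_subset_Sigma[OF sub] by auto
  have "y \<notin> C" if "(r, y) \<in> E\<^sup>*" for y
    using that
  proof (induction rule: rtrancl_induct)
    case base then show ?case using rC .
  next
    case (step y z)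
    show ?case
    proof
      assume "z \<in> C"
      then obtain p where "p \<in> C" "(p, z) \<in> E" using par by blast
      moreover have "z \<noteq> r" using \<open>z \<in> C\<close> rC by auto
      moreover have "z \<in> V" using step(2) sub by auto
      ultimately have "p = y" using uniq step(2) by blast
      then show False using step \<open>p \<in> C\<close> by auto
    qed
  qed
  then have "v \<notin> C" using reach[OF \<open>v \<in> V\<close>] by blast
  then show False unfolding C_def by auto
qed

definition D where "D v = {x. (v, x) \<in> E\<^sup>*}"

lemma D_sub: "v \<in> V \<Longrightarrow> D v \<subseteq> V"
proof
  fix x assume "v \<in> V" "x \<in> D v"
  then have "(v, x) \<in> E\<^sup>*" by (simp add: D_def)
  then show "x \<in> V"
  proof (cases rule: rtranclE)
    case base then show ?thesis using \<open>v \<in> V\<close> by simp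
  next
    case (step y) then show ?thesis using sub by blast
  qed
qed

lemma D_root: "D r = V" using D_sub[OF root(1)] reach unfolding D_def by auto

lemma D_rec: "D v = insert v (\<Union>c\<in>children E v. D c)"
proof
  show "D v \<subseteq> insert v (\<Union>c\<in>children E v. D c)"
  proof
    fix x assume "x \<in> D v"
    then have "(v, x) \<in> E\<^sup>*" by (simp add: D_def)
    then show "x \<in> insert v (\<Union>c\<in>children E v. D c)"
    proof (cases rule: converse_rtranclE)
      case base then show ?thesis by simp
    next
      case (step y) then show ?thesis by (auto simp: D_def children_def)
    qed
  qed
next
  show "insert v (\<Union>c\<in>children E v. D c) \<subseteq> D v"
  proof
    fix x assume "x \<in> insert v (\<Union>c\<in>children E v. D c)"
    then consider "x = v" | c where "(v, c) \<in> E" "(c, x) \<in> E\<^sup>*" by (auto simp: D_def children_def)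
    then show "x \<in> D v"
    proof cases
      case 1 then show ?thesis by (simp add: D_def)
    next
      case 2 then have "(v, x) \<in> E\<^sup>*" by (metis converse_rtrancl_into_rtrancl)
      then show ?thesis by (simp add: D_def)
    qed
  qed
qed

lemma D_child: "c \<in> children E v \<Longrightarrow> v \<in> V \<Longrightarrow> card (D c) < card (D v)"
proof -
  assume c: "c \<in> children E v" and v: "v \<in> V"
  have "D c \<subseteq> D v" using D_rec[of v] c by blast
  moreover have "v \<notin> D c"
  proof
    assume "v \<in> D c"
    then have "(c, v) \<in> E\<^sup>*" by (simp add: D_def)
    moreover have "(v, c) \<in> E" using c by (simp add: children_def)
    ultimately have "(v, v) \<in> E\<^sup>+" by (metis rtrancl_into_trancl2)
    then show False using acyclic by blast
  qed
  moreover have "v \<in> D v" by (simp add: D_def)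
  moreover have "finite (D v)" using D_sub[OF v] finite_subset finV by blast
  ultimately show ?thesis by (metis psubsetI psubset_card_mono)
qed

end

lemma axis_nth_if: "axis i x $ j = (if j = i then x else 0)"
  by (simp add: axis_def)

lemma scaleR_axis: "s *\<^sub>R axis i (t::real) = axis i (s * t)"
  by (simp add: vec_eq_iff axis_def)

lemma sum_PiE_delta:
  fixes P :: "('a \<Rightarrow> 'd::finite) \<Rightarrow> 'v::real_vector"
  assumes "finite A"
  shows "(\<Sum>js\<in>PiE A (\<lambda>_. UNIV). (\<Prod>c\<in>A. if js c = g c then b c else 0) *\<^sub>R P js)
         = (\<Prod>c\<in>A. b c) *\<^sub>R P (restrict g A)"
proof -
  let ?S = "PiE A (\<lambda>_. UNIV :: 'd set)"
  have fin: "finite ?S" using assms by (simp add: finite_PiE)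
  have mem: "restrict g A \<in> ?S" by simp
  have z: "(\<Sum>js\<in>?S - {restrict g A}. (\<Prod>c\<in>A. if js c = g c then b c else 0) *\<^sub>R P js) = 0"
  proof (rule sum.neutral, intro ballI)
    fix js assume js: "js \<in> ?S - {restrict g A}"
    then have "\<exists>c\<in>A. js c \<noteq> g c"
      by (auto simp: PiE_def extensional_def restrict_def fun_eq_iff split: if_splits)
    then obtain c where "c \<in> A" "js c \<noteq> g c" by blast
    then have "(\<Prod>c\<in>A. if js c = g c then b c else 0) = 0"
      using assms by (intro prod_zero) auto
    then show "(\<Prod>c\<in>A. if js c = g c then b c else 0) *\<^sub>R P js = 0" by simp
  qed
  have "(\<Prod>c\<in>A. if restrict g A c = g c then b c else 0) = (\<Prod>c\<in>A. b c)"
    by (rule prod.cong) auto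
  then show ?thesis
    using sum.remove[OF fin mem, of "\<lambda>js. (\<Prod>c\<in>A. if js c = g c then b c else 0) *\<^sub>R P js"] z
    by simp
qed

lemma prod_of_bool: "finite A \<Longrightarrow> (\<Prod>c\<in>A. (of_bool (P c) :: real)) = of_bool (\<forall>c\<in>A. P c)"
  by (induction A rule: finite_induct) auto

definition iota :: "'d \<Rightarrow> 'd \<Rightarrow> nat \<Rightarrow> nat \<Rightarrow> 'd" where
  "iota i1 i2 w v = (if v = w then i2 else i1)"

definition ff :: "'d::finite \<Rightarrow> 'd \<Rightarrow> nat \<Rightarrow> nat \<Rightarrow> nat \<Rightarrow> real^'d \<Rightarrow> real^'d" where
  "ff i1 i2 u w v = GG i1 i2 (if v = u then 0 else 1) (if v = u then 1 else 0) (axis (iota i1 i2 w v) 1)"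

definition gam :: "(nat \<times> nat) set \<Rightarrow> nat \<Rightarrow> nat \<Rightarrow> nat \<Rightarrow> bool" where
  "gam E u w x = (if x = u then w \<in> children E x else w \<notin> children E x)"

lemma cnt_map_iota:
  assumes "i1 \<noteq> i2" "distinct l"
  shows "cnt i2 (map (iota i1 i2 w) l) = (if w \<in> set l then 1 else 0)"
proof -
  have e: "((\<lambda>j. j = i2) \<circ> iota i1 i2 w) = (\<lambda>x. x = w)"
    using assms(1) by (auto simp: fun_eq_iff iota_def)
  have "cnt i2 (map (iota i1 i2 w) l) = length (filter (\<lambda>x. x = w) l)"
    unfolding cnt_def filter_map length_map e ..
  also have "\<dots> = card ({x. x = w} \<inter> set l)" using assms(2) by (rule distinct_length_filter)
  also have "\<dots> = (if w \<in> set l then 1 else 0)" by auto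
  finally show ?thesis .
qed

context rtree
begin

lemma ch_fin: "finite (children E v)"
proof -
  have "children E v \<subseteq> V" using sub by (auto simp: children_def)
  then show ?thesis using finV finite_subset by blast
qed

lemma ch_V: "c \<in> children E v \<Longrightarrow> c \<in> V" using sub by (auto simp: children_def)

lemma D_fin: "v \<in> V \<Longrightarrow> finite (D v)" using D_sub finV finite_subset by blast

lemma ed_val:
  assumes "i1 \<noteq> i2"
  shows "v \<in> V \<Longrightarrow> card (D v) \<le> k \<Longrightarrow>
    ed k E (ff i1 i2 u w) v 0 = axis (iota i1 i2 w v) (of_bool (\<forall>x\<in>D v. gam E u w x))"
proof (induction k arbitrary: v)
  case 0
  have "v \<in> D v" by (simp add: D_def)
  then have "card (D v) > 0" using D_fin[OF 0(1)] card_gt_0_iff by blast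
  then show ?case using 0 by simp
next
  case (Suc m)
  let ?Ch = "children E v"
  let ?f = "ff i1 i2 u w"
  let ?\<iota> = "iota i1 i2 w"
  let ?\<beta> = "\<lambda>c. of_bool (\<forall>x\<in>D c. gam E u w x) :: real"
  define sl where "sl = sorted_list_of_set ?Ch"
  have sl: "set sl = ?Ch" "distinct sl" using ch_fin by (auto simp: sl_def)
  have IH: "ed m E ?f c 0 = axis (?\<iota> c) (?\<beta> c)" if "c \<in> ?Ch" for c
  proof (rule Suc.IH)
    show "c \<in> V" using ch_V that .
    show "card (D c) \<le> m" using D_child[OF that Suc.prems(1)] Suc.prems(2) by simp
  qed
  have "ed (Suc m) E ?f v 0 = (\<Sum>js\<in>PiE ?Ch (\<lambda>_. UNIV).
        (\<Prod>c\<in>?Ch. ed m E ?f c 0 $ js c) *\<^sub>R partials (map js sl) (?f v) 0)"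
    by (simp add: sl_def)
  also have "\<dots> = (\<Sum>js\<in>PiE ?Ch (\<lambda>_. UNIV).
        (\<Prod>c\<in>?Ch. if js c = ?\<iota> c then ?\<beta> c else 0) *\<^sub>R partials (map js sl) (?f v) 0)"
    by (intro sum.cong refl arg_cong2[where f = scaleR] prod.cong) (auto simp: IH axis_nth_if)
  also have "\<dots> = (\<Prod>c\<in>?Ch. ?\<beta> c) *\<^sub>R partials (map (restrict ?\<iota> ?Ch) sl) (?f v) 0"
    by (rule sum_PiE_delta[OF ch_fin])
  also have "map (restrict ?\<iota> ?Ch) sl = map ?\<iota> sl"
    using sl(1) by (intro map_cong) auto
  also have "(\<Prod>c\<in>?Ch. ?\<beta> c) = of_bool (\<forall>c\<in>?Ch. \<forall>x\<in>D c. gam E u w x)"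
    by (rule prod_of_bool[OF ch_fin])
  also have "partials (map ?\<iota> sl) (?f v) 0 = of_bool (gam E u w v) *\<^sub>R axis (?\<iota> v) 1"
  proof -
    have set: "set (map ?\<iota> sl) \<subseteq> {i1, i2}" by (auto simp: iota_def)
    have cnt: "cnt i2 (map ?\<iota> sl) = (if w \<in> ?Ch then 1 else 0)"
      using cnt_map_iota[OF assms sl(2)] sl(1) by simp
    show ?thesis
      unfolding ff_def partials_GG[OF assms set] cnt
      by (auto simp: GG_0 gam_def)
  qed
  also have "of_bool (\<forall>c\<in>?Ch. \<forall>x\<in>D c. gam E u w x) *\<^sub>R (of_bool (gam E u w v) *\<^sub>R axis (?\<iota> v) 1)
      = axis (?\<iota> v) (of_bool (\<forall>x\<in>D v. gam E u w x))"
  proof -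
    have "(\<forall>x\<in>D v. gam E u w x) \<longleftrightarrow> gam E u w v \<and> (\<forall>c\<in>?Ch. \<forall>x\<in>D c. gam E u w x)"
      unfolding D_rec[of v] by blast
    then show ?thesis by (simp add: scaleR_axis)
  qed
  finally show ?case .
qed

lemma F_val:
  assumes "i1 \<noteq> i2" "V = {1..n}"
  shows "F n E (ff i1 i2 u w) 0 = axis (iota i1 i2 w r) (of_bool (\<forall>x\<in>V. gam E u w x))"
proof -
  have "card (D r) \<le> n" using D_root assms(2) by simp
  then show ?thesis unfolding F_def using ed_val[OF assms(1) root(1)] D_root assms(2) r_def by simp
qed

lemma all_gam:
  assumes "(u, w) \<in> E"
  shows "\<forall>x\<in>V. gam E u w x"
proof
  fix x assume "x \<in> V"
  have "u \<noteq> w"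
  proof
    assume "u = w" then have "(w, w) \<in> E\<^sup>+" using assms by auto
    then show False using acyclic by blast
  qed
  have wV: "w \<in> V" "w \<noteq> r" using sub assms root(2) by auto
  show "gam E u w x"
  proof (cases "x = u")
    case True then show ?thesis using assms by (simp add: gam_def children_def)
  next
    case False
    have "(x, w) \<notin> E" using uniq[OF wV _ assms] False by blast
    then show ?thesis using False by (simp add: gam_def children_def)
  qed
qed

lemma not_gam:
  assumes "(u, w) \<notin> E" "u \<in> V"
  shows "\<not> (\<forall>x\<in>V. gam E u w x)"
  using assms by (auto simp: gam_def children_def)

end


lemma distinguish:
  assumes "\<tau> \<in> RT n" "\<tau>' \<in> RT n" "(u, w) \<in> \<tau>" "(u, w) \<notin> \<tau>'" "(i1::'d::finite) \<noteq> i2"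
  shows "F n \<tau> (ff i1 i2 u w) \<noteq> F n \<tau>' (ff i1 i2 u w)"
proof -
  interpret T: rtree "{1..n}" \<tau> using assms(1) by unfold_locales (auto simp: RT_def)
  interpret T': rtree "{1..n}" \<tau>' using assms(2) by unfold_locales (auto simp: RT_def)
  have uV: "u \<in> {1..n}" using T.sub assms(3) by auto
  have b1: "of_bool (\<forall>x\<in>{1..n}. gam \<tau> u w x) = (1::real)" using T.all_gam[OF assms(3)] by simp
  have b0: "of_bool (\<forall>x\<in>{1..n}. gam \<tau>' u w x) = (0::real)" using T'.not_gam[OF assms(4) uV] by simp
  have "F n \<tau> (ff i1 i2 u w) 0 = axis (iota i1 i2 w T.r) 1"
    unfolding T.F_val[OF assms(5) refl, of u w] b1 ..
  moreover have "F n \<tau>' (ff i1 i2 u w) 0 = axis (iota i1 i2 w T'.r) 0"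
    unfolding T'.F_val[OF assms(5) refl, of u w] b0 ..
  moreover have "axis (iota i1 i2 w T.r) (1::real) \<noteq> axis (iota i1 i2 w T'.r) 0"
  proof
    assume h: "axis (iota i1 i2 w T.r) (1::real) = axis (iota i1 i2 w T'.r) 0"
    have "(1::real) = 0" using arg_cong[OF h, of "\<lambda>v. v $ iota i1 i2 w T.r"] by (simp add: axis_nth_if)
    then show False by simp
  qed
  ultimately show ?thesis by metis
qed

lemma smooth_ff: "i1 \<noteq> i2 \<Longrightarrow> smooth (ff i1 i2 u w v)"
  unfolding ff_def by (rule smooth_GG)

theorem theorem3p1:
  fixes CD :: "nat \<Rightarrow> 'c set"
    and a :: "nat \<Rightarrow> (nat \<Rightarrow> nat) \<Rightarrow> 'c \<Rightarrow> 'c"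
    and H :: "nat \<Rightarrow> 'c \<Rightarrow> (nat \<Rightarrow> real^'d::finite \<Rightarrow> real^'d) \<Rightarrow> real^'d \<Rightarrow> real^'d"
    and p :: "nat \<Rightarrow> (nat \<times> nat) set \<Rightarrow> 'c"
  assumes "CARD('d) \<ge> 2"
    and "is_comb_descr CD a H"
    and "compatible_RT CD a H p"
  shows "\<forall>n. bij_betw (p n) (RT n) (CD n)"
proof
  fix n
  have "\<exists>i1 i2 :: 'd. i1 \<noteq> i2"
  proof (rule ccontr)
    assume "\<not> (\<exists>i1 i2 :: 'd. i1 \<noteq> i2)"
    then have "(UNIV :: 'd set) = {undefined}" by auto
    then have "CARD('d) = card {undefined :: 'd}" by (rule arg_cong[where f = card])
    then have "CARD('d) = 1" by simp
    then show False using assms(1) by simp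
  qed
  then obtain i1 i2 :: 'd where i12: "i1 \<noteq> i2" by blast
  have comp: "p n ` RT n = CD n" "\<forall>\<tau>\<in>RT n. eqW n (F n \<tau>) (H n (p n \<tau>))"
    using assms(3) unfolding compatible_RT_def by blast+
  have "inj_on (p n) (RT n)"
  proof (rule inj_onI, rule ccontr)
    fix \<tau> \<tau>' assume t: "\<tau> \<in> RT n" "\<tau>' \<in> RT n" "p n \<tau> = p n \<tau>'" "\<tau> \<noteq> \<tau>'"
    have eq: "F n \<tau> f = F n \<tau>' f" if "\<forall>i\<in>{1..n}. smooth (f i)" for f :: "nat \<Rightarrow> real^'d \<Rightarrow> real^'d"
    proof -
      have "F n \<tau> f = H n (p n \<tau>) f" using comp(2) t(1) that unfolding eqW_def by blast
      moreover have "F n \<tau>' f = H n (p n \<tau>') f" using comp(2) t(2) that unfolding eqW_def by blast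
      ultimately show ?thesis using t(3) by simp
    qed
    have sm: "\<forall>i\<in>{1..n}. smooth (ff i1 i2 u w i)" for u w using smooth_ff[OF i12] by blast
    from t(4) obtain u w where "((u, w) \<in> \<tau> \<and> (u, w) \<notin> \<tau>') \<or> ((u, w) \<in> \<tau>' \<and> (u, w) \<notin> \<tau>)" by auto
    then show False
      using distinguish[OF t(1) t(2) _ _ i12] distinguish[OF t(2) t(1) _ _ i12] eq[OF sm] by metis
  qed
  then show "bij_betw (p n) (RT n) (CD n)" using comp(1) by (simp add: bij_betw_def)
qed

end
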